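(* Let $2\le j<k$ be integers and consider the election $E(j,k)$ and the committee $W=D_{k-2}\cup\{x,a\}$. Then (1) $\Delta(W,a,b)=\delta(j,k)$, where $\delta(j,k)=\frac{j!}{\prod_{j'=0}^{j}(k-j')}$; and (2) every voter $v$ of $E(j,k)$ satisfies $|A_v\cap W|\ge k-(j+1)$.
   Context: An approval election is a tuple $(N,C,(A_v)_{v\in N},k)$ with voters $N$, candidates $C$, ballots $A_v\subseteq C$ and target committee size $k$. The PAV score of $W\subseteq C$ is $\textsc{pavsc}(W)=\sum_{v\in N}\sum_{i=1}^{|A_v\cap W|}\frac1i$, and $\Delta(W,a,b)=\textsc{pavsc}((W\setminus\{a\})\cup\{b\})-\textsc{pavsc}(W)$. Let $D_\ell=\{d_1,\dots,d_\ell\}$ denote a set of dummy candidates ($D_0=\varnothing$, $D_\ell\subseteq D_{\ell+1}$). Elections $F(j,k)$, for $1\le j<k$, with candidate set $D_{k-1}\cup\{a,b\}$ and committee size $k$, are defined recursively. $F(1,k)$ has two voters with ballots $D_{k-1}\cup\{a\}$ and $D_{k-2}\cup\{b\}$. For $j>1$, take a copy of $F(j-1,k)$ with candidates $D_{k-1}\cup\{a_1,b_1\}$ and a copy of $F(j-1,k-1)$ with candidates $D_{k-2}\cup\{a_2,b_2\}$, with disjoint voter sets; in every ballot of the first copy replace $a_1$ by $b$ and $b_1$ by $a$, in every ballot of the second copy replace $a_2$ by $a$ and $b_2$ by $b$; $F(j,k)$ has the union of the two voter sets with these ballots, candidates $D_{k-1}\cup\{a,b\}$, and committee size $k$. The election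 $E(j,k)$ (for $2\le j<k$) is defined as follows: take two copies of $F(j-1,k-1)$ with disjoint voter sets $N_1,N_2$ and candidates $D_{k-2}\cup\{a_1,b_1\}$ and $D_{k-2}\cup\{a_2,b_2\}$ respectively; in ballots of voters in $N_1$ replace $a_1$ by $b$ and $b_1$ by $a$ and add a new candidate $x$; in ballots of voters in $N_2$ replace $a_2$ by $a$ and $b_2$ by $b$ and add a new candidate $y$. $E(j,k)$ has voters $N_1\cup N_2$, candidates $D_{k-2}\cup\{x,y,a,b\}$ and committee size $k$. *)

theory Defs
  imports Complex_Main
begin

datatype cand = Dm nat | Ca | Cb | Cx | Cy

definition Dset :: "nat \<Rightarrow> cand set" where
  "Dset l = Dm ` {1..l}"

text \<open>An election: list of ballots (one per voter; voter sets as lists, disjoint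
  union = append), candidate set, committee size.\<close>
record election =
  ballots :: "cand set list"
  cands :: "cand set"
  csize :: nat

definition pavsc :: "election \<Rightarrow> cand set \<Rightarrow> real" where
  "pavsc E W = sum_list (map (\<lambda>A. \<Sum>i=1..card (A \<inter> W). 1 / real i) (ballots E))"

definition Delta :: "election \<Rightarrow> cand set \<Rightarrow> cand \<Rightarrow> cand \<Rightarrow> real" where
  "Delta E W a b = pavsc E ((W - {a}) \<union> {b}) - pavsc E W"

text \<open>Swap a and b (renaming a copy's a_1 to b and b_1 to a).\<close>
fun swap_ab :: "cand \<Rightarrow> cand" where
  "swap_ab Ca = Cb"
| "swap_ab Cb = Ca"
| "swap_ab c = c"

text \<open>Ballot lists of F(j,k) (meaningful for 1 \<le> j < k).\<close>
fun Fb :: "nat \<Rightarrow> nat \<Rightarrow> cand set list" where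
  "Fb 0 k = []"
| "Fb (Suc 0) k = [Dset (k - 1) \<union> {Ca}, Dset (k - 2) \<union> {Cb}]"
| "Fb (Suc (Suc j)) k = map (\<lambda>A. swap_ab ` A) (Fb (Suc j) k) @ Fb (Suc j) (k - 1)"

definition F :: "nat \<Rightarrow> nat \<Rightarrow> election" where
  "F j k = \<lparr> ballots = Fb j k, cands = Dset (k - 1) \<union> {Ca, Cb}, csize = k \<rparr>"

definition E :: "nat \<Rightarrow> nat \<Rightarrow> election" where
  "E j k = \<lparr> ballots =
      map (\<lambda>A. swap_ab ` A \<union> {Cx}) (ballots (F (j - 1) (k - 1)))
    @ map (\<lambda>A. A \<union> {Cy}) (ballots (F (j - 1) (k - 1))),
    cands = Dset (k - 2) \<union> {Cx, Cy, Ca, Cb}, csize = k \<rparr>"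

end

theory Submission
  imports Defs
begin

lemma card_Dset[simp]: "card (Dset m) = m"
  unfolding Dset_def by (simp add: card_image inj_on_def)

lemma finite_Dset[simp]: "finite (Dset m)"
  unfolding Dset_def by simp

lemma special_notin_Dset[simp]: "Ca \<notin> Dset m" "Cb \<notin> Dset m" "Cx \<notin> Dset m" "Cy \<notin> Dset m"
  unfolding Dset_def by auto

lemma swap_Dset[simp]: "swap_ab ` Dset m = Dset m"
proof -
  have "\<And>c. c \<in> Dset m \<Longrightarrow> swap_ab c = c"
    unfolding Dset_def by auto
  then show ?thesis by (simp add: image_cong[OF refl])
qed

lemma swap_DCa[simp]: "swap_ab ` insert Ca (Dset m) = insert Cb (Dset m)"
  by simp
lemma swap_DCb[simp]: "swap_ab ` insert Cb (Dset m) = insert Ca (Dset m)"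
  by simp

lemma Dset_inter: "m \<le> n \<Longrightarrow> Dset m \<inter> Dset n = Dset m"
  unfolding Dset_def by auto

lemma Dset_sub: "m \<le> n \<Longrightarrow> Dset m \<subseteq> Dset n"
  unfolding Dset_def by auto

lemma Fb_inv:
  "1 \<le> j \<Longrightarrow> j < k \<Longrightarrow> A \<in> set (Fb j k) \<Longrightarrow>
    \<exists>m. k - 1 - j \<le> m \<and> m \<le> k - 1 \<and> (A = Dset m \<union> {Ca} \<or> A = Dset m \<union> {Cb})"
proof (induction j k arbitrary: A rule: Fb.induct)
  case (1 k)
  then show ?case by simp
next
  case (2 k)
  then consider "A = Dset (k - 1) \<union> {Ca}" | "A = Dset (k - 2) \<union> {Cb}" by auto
  then show ?case
  proof cases
    case 1 then show ?thesis by (intro exI[of _ "k - 1"]) auto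
  next
    case 2 then show ?thesis by (intro exI[of _ "k - 2"]) auto
  qed
next
  case (3 j k)
  from "3.prems"(3) consider (a) B where "B \<in> set (Fb (Suc j) k)" "A = swap_ab ` B"
    | (b) "A \<in> set (Fb (Suc j) (k - 1))"
    by auto
  then show ?case
  proof cases
    case a
    have "\<exists>m. k - 1 - Suc j \<le> m \<and> m \<le> k - 1 \<and> (B = Dset m \<union> {Ca} \<or> B = Dset m \<union> {Cb})"
      using "3.IH" "3.prems" a(1) by simp
    then obtain m where
      m: "k - 1 - Suc j \<le> m" "m \<le> k - 1" "B = Dset m \<union> {Ca} \<or> B = Dset m \<union> {Cb}" by auto
    have "A = Dset m \<union> {Ca} \<or> A = Dset m \<union> {Cb}" using m(3) a(2) by (elim disjE) simp_all
    then show ?thesis using m(1,2) by (intro exI[of _ m]) simp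
  next
    case b
    have "\<exists>m. k - 1 - 1 - Suc j \<le> m \<and> m \<le> k - 1 - 1 \<and> (A = Dset m \<union> {Ca} \<or> A = Dset m \<union> {Cb})"
      using "3.IH" "3.prems" b by simp
    then obtain m where
      m: "k - 1 - 1 - Suc j \<le> m" "m \<le> k - 1 - 1" "A = Dset m \<union> {Ca} \<or> A = Dset m \<union> {Cb}" by auto
    show ?thesis using m by (intro exI[of _ m]) simp
  qed
qed

lemma alg:
  fixes J k :: nat
  assumes "Suc J < k"
  shows "fact (Suc J) / (\<Prod>i=0..Suc J. real (k + 1 - i)) - fact (Suc J) / (\<Prod>i=0..Suc J. real (k - 1 + 1 - i))
       = - fact (Suc (Suc J)) / (\<Prod>i=0..Suc (Suc J). real (k + 1 - i))"
proof -
  define Q where "Q = (\<Prod>i=0..J. real (k - i))"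
  have Qpos: "Q > 0" unfolding Q_def using assms by (intro prod_pos) auto
  have e1: "(\<Prod>i=0..Suc J. real (k + 1 - i)) = real (k + 1) * Q"
    unfolding Q_def by (subst prod.atLeast0_atMost_Suc_shift) simp
  have e2: "(\<Prod>i=0..Suc J. real (k - 1 + 1 - i)) = Q * real (k - Suc J)"
  proof -
    have "(\<Prod>i=0..Suc J. real (k - 1 + 1 - i)) = (\<Prod>i=0..Suc J. real (k - i))"
      using assms by (intro prod.cong) auto
    then show ?thesis unfolding Q_def by (simp add: prod.atLeast0_atMost_Suc)
  qed
  have e3: "(\<Prod>i=0..Suc (Suc J). real (k + 1 - i)) = real (k + 1) * (Q * real (k - Suc J))"
  proof -
    have "(\<Prod>i=0..Suc (Suc J). real (k + 1 - i)) = real (k + 1) * (\<Prod>i=0..Suc J. real (k - i))"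
      by (subst prod.atLeast0_atMost_Suc_shift) simp
    then show ?thesis unfolding Q_def by (simp add: prod.atLeast0_atMost_Suc)
  qed
  have kk: "real (k - Suc J) = real k - real J - 1" using assms by simp
  have pos: "real k - real J - 1 > 0" using assms by simp
  show ?thesis unfolding e1 e2 e3 kk using Qpos pos
    by (simp add: divide_simps) (simp add: algebra_simps)
qed

definition fv :: "cand set \<Rightarrow> real" where
  "fv A = (if Ca \<in> A then 1 else -1) / ((real (card (A - {Ca, Cb})) + 1) * (real (card (A - {Ca, Cb})) + 2))"

lemma fv_Ca[simp]: "fv (insert Ca (Dset m)) = 1 / ((real m + 1) * (real m + 2))"
proof -
  have "insert Ca (Dset m) - {Ca, Cb} = Dset m" by auto
  then show ?thesis unfolding fv_def by simp
qed

lemma fv_Cb[simp]: "fv (insert Cb (Dset m)) = - 1 / ((real m + 1) * (real m + 2))"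
proof -
  have "insert Cb (Dset m) - {Ca, Cb} = Dset m" by auto
  then show ?thesis unfolding fv_def by simp
qed

lemma fv_swap: "A = Dset m \<union> {Ca} \<or> A = Dset m \<union> {Cb} \<Longrightarrow> fv (swap_ab ` A) = - fv A"
  by (elim disjE) simp_all

lemma Fb_sum:
  "1 \<le> j \<Longrightarrow> j < k \<Longrightarrow>
   sum_list (map fv (Fb j k)) = - fact (Suc j) / (\<Prod>i=0..Suc j. real (k + 1 - i))"
proof (induction j k rule: Fb.induct)
  case (1 k)
  then show ?case by simp
next
  case (2 k)
  define n where "n = k - 2"
  have k: "k = Suc (Suc n)" using "2.prems" unfolding n_def by simp
  have p: "(\<Prod>i=0..Suc (Suc 0). real (k + 1 - i)) = (real n + 3) * (real n + 2) * (real n + 1)"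
    unfolding k by (simp add: prod.atLeast0_atMost_Suc algebra_simps)
  have l: "Fb 1 k = [Dset (Suc n) \<union> {Ca}, Dset n \<union> {Cb}]" unfolding k by simp
  have e: "1 / ((real (Suc n) + 1) * (real (Suc n) + 2)) + - 1 / ((real n + 1) * (real n + 2))
     = - 2 / ((real n + 3) * (real n + 2) * (real n + 1))"
    by (simp add: divide_simps) (simp add: algebra_simps)
  have "sum_list (map fv (Fb 1 k)) = 1 / ((real (Suc n) + 1) * (real (Suc n) + 2)) + - 1 / ((real n + 1) * (real n + 2))"
    unfolding l by simp
  then show ?case unfolding p using e by simp
next
  case (3 j k)
  have sw: "sum_list (map fv (map (\<lambda>A. swap_ab ` A) (Fb (Suc j) k))) = - sum_list (map fv (Fb (Suc j) k))"
  proof -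
    have "map (\<lambda>A. fv (swap_ab ` A)) (Fb (Suc j) k) = map (\<lambda>A. - fv A) (Fb (Suc j) k)"
    proof (rule map_cong[OF refl])
      fix A assume "A \<in> set (Fb (Suc j) k)"
      then obtain m where "A = Dset m \<union> {Ca} \<or> A = Dset m \<union> {Cb}"
        using Fb_inv[of "Suc j" k A] "3.prems" by auto
      then show "fv (swap_ab ` A) = - fv A" by (rule fv_swap)
    qed
    note eq = this
    have "sum_list (map fv (map (\<lambda>A. swap_ab ` A) (Fb (Suc j) k))) = sum_list (map (\<lambda>A. fv (swap_ab ` A)) (Fb (Suc j) k))"
      by (simp add: o_def)
    also have "\<dots> = sum_list (map (\<lambda>A. - fv A) (Fb (Suc j) k))"
      by (rule arg_cong[where f=sum_list, OF eq])
    also have "\<dots> = - sum_list (map fv (Fb (Suc j) k))"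
      by (simp add: uminus_sum_list_map o_def)
    finally show ?thesis .
  qed
  have IH1: "sum_list (map fv (Fb (Suc j) k)) = - fact (Suc (Suc j)) / (\<Prod>i=0..Suc (Suc j). real (k + 1 - i))"
    using "3.IH"(1) "3.prems" by simp
  have IH2: "sum_list (map fv (Fb (Suc j) (k - 1))) = - fact (Suc (Suc j)) / (\<Prod>i=0..Suc (Suc j). real (k - 1 + 1 - i))"
    using "3.IH"(2) "3.prems" by simp
  have "sum_list (map fv (Fb (Suc (Suc j)) k)) = - sum_list (map fv (Fb (Suc j) k)) + sum_list (map fv (Fb (Suc j) (k - 1)))"
    using sw by simp
  also have "\<dots> = - fact (Suc (Suc (Suc j))) / (\<Prod>i=0..Suc (Suc (Suc j)). real (k + 1 - i))"
    unfolding IH1 IH2 using alg[of "Suc j" k] "3.prems" by simp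
  finally show ?case .
qed


definition hsum :: "nat \<Rightarrow> real" where
  "hsum n = (\<Sum>i=1..n. 1 / real i)"

lemma hsum_Suc: "hsum (Suc n) = hsum n + 1 / real (Suc n)"
  unfolding hsum_def by simp

lemma pavsc_alt: "pavsc El S = sum_list (map (\<lambda>A. hsum (card (A \<inter> S))) (ballots El))"
  unfolding pavsc_def hsum_def by simp

lemma int_SD: "m \<le> n \<Longrightarrow> S \<inter> range Dm = {} \<Longrightarrow> T \<inter> range Dm = {} \<Longrightarrow>
  (S \<union> Dset m) \<inter> (T \<union> Dset n) = (S \<inter> T) \<union> Dset m"
  unfolding Dset_def by auto

lemma card_SD: "finite S \<Longrightarrow> S \<inter> range Dm = {} \<Longrightarrow> card (S \<union> Dset m) = card S + m"
proof -
  assume "finite S" "S \<inter> range Dm = {}"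
  then have "S \<inter> Dset m = {}" unfolding Dset_def by auto
  then show ?thesis using \<open>finite S\<close> by (simp add: card_Un_disjoint)
qed

lemma key:
  assumes "m \<le> n" "A = Dset m \<union> {Ca} \<or> A = Dset m \<union> {Cb}"
  shows "(hsum (card ((swap_ab ` A \<union> {Cx}) \<inter> ({Cx, Cb} \<union> Dset n))) - hsum (card ((swap_ab ` A \<union> {Cx}) \<inter> ({Cx, Ca} \<union> Dset n))))
       + (hsum (card ((A \<union> {Cy}) \<inter> ({Cx, Cb} \<union> Dset n))) - hsum (card ((A \<union> {Cy}) \<inter> ({Cx, Ca} \<union> Dset n))))
       = - fv A"
  using assms(2)
proof
  assume A: "A = Dset m \<union> {Ca}"
  have b1: "swap_ab ` A \<union> {Cx} = {Cb, Cx} \<union> Dset m" unfolding A by auto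
  have b2: "A \<union> {Cy} = {Ca, Cy} \<union> Dset m" unfolding A by auto
  have c1: "card ((swap_ab ` A \<union> {Cx}) \<inter> ({Cx, Cb} \<union> Dset n)) = Suc (Suc m)"
    unfolding b1 using assms(1) by (subst int_SD) (auto simp: card_SD)
  have c2: "card ((swap_ab ` A \<union> {Cx}) \<inter> ({Cx, Ca} \<union> Dset n)) = Suc m"
    unfolding b1 using assms(1) by (subst int_SD) (auto simp: card_SD)
  have c3: "card ((A \<union> {Cy}) \<inter> ({Cx, Cb} \<union> Dset n)) = m"
    unfolding b2 using assms(1) by (subst int_SD) (auto simp: card_SD)
  have c4: "card ((A \<union> {Cy}) \<inter> ({Cx, Ca} \<union> Dset n)) = Suc m"
    unfolding b2 using assms(1) by (subst int_SD) (auto simp: card_SD)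
  have f: "fv A = 1 / ((real m + 1) * (real m + 2))" unfolding A by simp
  show ?thesis unfolding c1 c2 c3 c4 f hsum_Suc
    by (simp add: divide_simps) (simp add: algebra_simps)
next
  assume A: "A = Dset m \<union> {Cb}"
  have b1: "swap_ab ` A \<union> {Cx} = {Ca, Cx} \<union> Dset m" unfolding A by auto
  have b2: "A \<union> {Cy} = {Cb, Cy} \<union> Dset m" unfolding A by auto
  have c1: "card ((swap_ab ` A \<union> {Cx}) \<inter> ({Cx, Cb} \<union> Dset n)) = Suc m"
    unfolding b1 using assms(1) by (subst int_SD) (auto simp: card_SD)
  have c2: "card ((swap_ab ` A \<union> {Cx}) \<inter> ({Cx, Ca} \<union> Dset n)) = Suc (Suc m)"
    unfolding b1 using assms(1) by (subst int_SD) (auto simp: card_SD)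
  have c3: "card ((A \<union> {Cy}) \<inter> ({Cx, Cb} \<union> Dset n)) = Suc m"
    unfolding b2 using assms(1) by (subst int_SD) (auto simp: card_SD)
  have c4: "card ((A \<union> {Cy}) \<inter> ({Cx, Ca} \<union> Dset n)) = m"
    unfolding b2 using assms(1) by (subst int_SD) (auto simp: card_SD)
  have f: "fv A = - 1 / ((real m + 1) * (real m + 2))" unfolding A by simp
  show ?thesis unfolding c1 c2 c3 c4 f hsum_Suc
    by (simp add: divide_simps) (simp add: algebra_simps)
qed


lemma key2:
  assumes "m \<le> n" "A = Dset m \<union> {Ca} \<or> A = Dset m \<union> {Cb}"
  shows "m \<le> card ((swap_ab ` A \<union> {Cx}) \<inter> ({Cx, Ca} \<union> Dset n)) \<and> m \<le> card ((A \<union> {Cy}) \<inter> ({Cx, Ca} \<union> Dset n))"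
  using assms(2)
proof
  assume A: "A = Dset m \<union> {Ca}"
  have b1: "swap_ab ` A \<union> {Cx} = {Cb, Cx} \<union> Dset m" unfolding A by auto
  have b2: "A \<union> {Cy} = {Ca, Cy} \<union> Dset m" unfolding A by auto
  have c2: "card ((swap_ab ` A \<union> {Cx}) \<inter> ({Cx, Ca} \<union> Dset n)) = Suc m"
    unfolding b1 using assms(1) by (subst int_SD) (auto simp: card_SD)
  have c4: "card ((A \<union> {Cy}) \<inter> ({Cx, Ca} \<union> Dset n)) = Suc m"
    unfolding b2 using assms(1) by (subst int_SD) (auto simp: card_SD)
  show ?thesis unfolding c2 c4 by simp
next
  assume A: "A = Dset m \<union> {Cb}"
  have b1: "swap_ab ` A \<union> {Cx} = {Ca, Cx} \<union> Dset m" unfolding A by auto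
  have b2: "A \<union> {Cy} = {Cb, Cy} \<union> Dset m" unfolding A by auto
  have c2: "card ((swap_ab ` A \<union> {Cx}) \<inter> ({Cx, Ca} \<union> Dset n)) = Suc (Suc m)"
    unfolding b1 using assms(1) by (subst int_SD) (auto simp: card_SD)
  have c4: "card ((A \<union> {Cy}) \<inter> ({Cx, Ca} \<union> Dset n)) = m"
    unfolding b2 using assms(1) by (subst int_SD) (auto simp: card_SD)
  show ?thesis unfolding c2 c4 by simp
qed

theorem lemma5:
  fixes j k :: nat
  assumes "2 \<le> j" and "j < k"
  shows "Delta (E j k) (Dset (k - 2) \<union> {Cx, Ca}) Ca Cb
           = fact j / (\<Prod>j'=0..j. real (k - j'))
         \<and> (\<forall>A \<in> set (ballots (E j k)). k - (j + 1) \<le> card (A \<inter> (Dset (k - 2) \<union> {Cx, Ca})))"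
proof -
  define J where "J = j - 1"
  have J: "1 \<le> J" "J < k - 1" "j = Suc J" using assms unfolding J_def by auto
  define L where "L = Fb J (k - 1)"
  have balE: "ballots (E j k) = map (\<lambda>A. swap_ab ` A \<union> {Cx}) L @ map (\<lambda>A. A \<union> {Cy}) L"
    unfolding E_def F_def L_def J_def by simp
  have W: "Dset (k - 2) \<union> {Cx, Ca} = {Cx, Ca} \<union> Dset (k - 2)" by auto
  have W': "(Dset (k - 2) \<union> {Cx, Ca} - {Ca}) \<union> {Cb} = {Cx, Cb} \<union> Dset (k - 2)" by auto
  have inv: "\<exists>m. k - (j + 1) \<le> m \<and> m \<le> k - 2 \<and> (A = Dset m \<union> {Ca} \<or> A = Dset m \<union> {Cb})"
    if "A \<in> set L" for A
  proof -
    have mem: "A \<in> set (Fb J (k - 1))" using that unfolding L_def .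
    obtain m where "k - 1 - 1 - J \<le> m" "m \<le> k - 1 - 1" "A = Dset m \<union> {Ca} \<or> A = Dset m \<union> {Cb}"
      using Fb_inv[OF J(1) J(2) mem] by blast
    then show ?thesis using J by (intro exI[of _ m]) auto
  qed
  let ?g = "\<lambda>A. (hsum (card ((swap_ab ` A \<union> {Cx}) \<inter> ({Cx, Cb} \<union> Dset (k - 2)))) - hsum (card ((swap_ab ` A \<union> {Cx}) \<inter> ({Cx, Ca} \<union> Dset (k - 2)))))
       + (hsum (card ((A \<union> {Cy}) \<inter> ({Cx, Cb} \<union> Dset (k - 2)))) - hsum (card ((A \<union> {Cy}) \<inter> ({Cx, Ca} \<union> Dset (k - 2)))))"
  have "Delta (E j k) (Dset (k - 2) \<union> {Cx, Ca}) Ca Cb = sum_list (map ?g L)"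
    unfolding Delta_def pavsc_alt balE W' unfolding W
    by (simp only: map_append sum_list_append map_map o_def sum_list_addf sum_list_subtractf)
  also have "\<dots> = sum_list (map (\<lambda>A. - fv A) L)"
  proof (rule arg_cong[where f=sum_list], rule map_cong[OF refl])
    fix A assume "A \<in> set L"
    then obtain m where "m \<le> k - 2" "A = Dset m \<union> {Ca} \<or> A = Dset m \<union> {Cb}" using inv by blast
    then show "?g A = - fv A" by (rule key)
  qed
  also have "\<dots> = - sum_list (map fv L)" by (simp add: uminus_sum_list_map o_def)
  also have "\<dots> = fact (Suc J) / (\<Prod>i=0..Suc J. real (k - 1 + 1 - i))"
    unfolding L_def using Fb_sum[of J "k - 1"] J by simp
  also have "\<dots> = fact j / (\<Prod>j'=0..j. real (k - j'))"
    using J assms by simp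
  finally have P1: "Delta (E j k) (Dset (k - 2) \<union> {Cx, Ca}) Ca Cb = fact j / (\<Prod>j'=0..j. real (k - j'))" .
  have P2: "\<forall>B \<in> set (ballots (E j k)). k - (j + 1) \<le> card (B \<inter> (Dset (k - 2) \<union> {Cx, Ca}))"
  proof
    fix B assume "B \<in> set (ballots (E j k))"
    then obtain A where A: "A \<in> set L" "B = swap_ab ` A \<union> {Cx} \<or> B = A \<union> {Cy}"
      unfolding balE by auto
    obtain m where m: "k - (j + 1) \<le> m" "m \<le> k - 2" "A = Dset m \<union> {Ca} \<or> A = Dset m \<union> {Cb}"
      using inv[OF A(1)] by blast
    from key2[OF m(2,3)] A(2) have "m \<le> card (B \<inter> ({Cx, Ca} \<union> Dset (k - 2)))" by auto
    then show "k - (j + 1) \<le> card (B \<inter> (Dset (k - 2) \<union> {Cx, Ca}))" unfolding W using m(1) by simp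
  qed
  show ?thesis using P1 P2 by blast
qed

end
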